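(* Let $R$ be a right $\sigma$-reversible ring, where $\sigma$ is an endomorphism of $R$ with $\sigma(1)=1$. If $R[[x;\sigma]]$ is a p.p.-ring, then $R$ is a p.p.-ring.
   Context: All rings are associative with identity; $\sigma$ denotes a nonzero, non-identity ring endomorphism of $R$. The skew power series ring $R[[x;\sigma]]$ consists of all formal series $\sum_{i=0}^\infty a_i x^i$ with $a_i\in R$, added termwise and multiplied using distributivity and the rule $xa=\sigma(a)x$ for $a\in R$. $R$ is right $\sigma$-reversible if for all $a,b\in R$, $ab=0$ implies $b\sigma(a)=0$. A ring $S$ is a right (left) p.p.-ring if the right (left) annihilator of every element of $S$ is generated, as a right (left) ideal, by an idempotent; $S$ is a p.p.-ring if it is both a right and a left p.p.-ring. *)

theory Defs
  imports Main
begin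

definition ring_endo :: "('a::ring_1 \<Rightarrow> 'a) \<Rightarrow> bool" where
  "ring_endo \<sigma> \<longleftrightarrow> (\<forall>a b. \<sigma> (a + b) = \<sigma> a + \<sigma> b) \<and> (\<forall>a b. \<sigma> (a * b) = \<sigma> a * \<sigma> b)"

definition right_sigma_reversible :: "('a::ring_1 \<Rightarrow> 'a) \<Rightarrow> bool" where
  "right_sigma_reversible \<sigma> \<longleftrightarrow> (\<forall>a b. a * b = 0 \<longrightarrow> b * \<sigma> a = 0)"

text \<open>Skew power series ring R[[x;sigma]]: a series sum a_i x^i is represented by its
  coefficient function nat => R; addition is termwise, zero is the zero function, and
  multiplication follows x a = sigma(a) x, i.e. (a_i x^i)(b_j x^j) = a_i sigma^i(b_j) x^(i+j).\<close>
definition skew_mult :: "('a::ring_1 \<Rightarrow> 'a) \<Rightarrow> (nat \<Rightarrow> 'a) \<Rightarrow> (nat \<Rightarrow> 'a) \<Rightarrow> (nat \<Rightarrow> 'a)" where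
  "skew_mult \<sigma> f g = (\<lambda>n. \<Sum>i\<le>n. f i * (\<sigma> ^^ i) (g (n - i)))"

definition skew_zero :: "nat \<Rightarrow> 'a::ring_1" where
  "skew_zero = (\<lambda>_. 0)"

text \<open>p.p.-rings, for a ring given by its multiplication and zero (carrier = whole type).\<close>
definition right_pp :: "('b \<Rightarrow> 'b \<Rightarrow> 'b) \<Rightarrow> 'b \<Rightarrow> bool" where
  "right_pp mult z \<longleftrightarrow> (\<forall>a. \<exists>e. mult e e = e \<and> {b. mult a b = z} = {mult e c | c. True})"

definition left_pp :: "('b \<Rightarrow> 'b \<Rightarrow> 'b) \<Rightarrow> 'b \<Rightarrow> bool" where
  "left_pp mult z \<longleftrightarrow> (\<forall>a. \<exists>e. mult e e = e \<and> {b. mult b a = z} = {mult c e | c. True})"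

definition pp_ring :: "('b \<Rightarrow> 'b \<Rightarrow> 'b) \<Rightarrow> 'b \<Rightarrow> bool" where
  "pp_ring mult z \<longleftrightarrow> right_pp mult z \<and> left_pp mult z"

end

theory Submission
  imports Defs
begin

definition cst :: "'a::ring_1 \<Rightarrow> nat \<Rightarrow> 'a" where
  "cst c = (\<lambda>n. if n = 0 then c else 0)"

lemma sm0: "skew_mult \<sigma> f g 0 = f 0 * g 0"
  by (simp add: skew_mult_def)

lemma sm_cst_left: "skew_mult \<sigma> (cst a) g = (\<lambda>n. a * g n)"
proof
  fix n
  have "skew_mult \<sigma> (cst a) g n = (\<Sum>i\<le>n. if i = 0 then a * g n else 0)"
    unfolding skew_mult_def cst_def by (rule sum.cong) auto
  also have "\<dots> = a * g n" by simp
  finally show "skew_mult \<sigma> (cst a) g n = a * g n" .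
qed

lemma endo0: "ring_endo \<sigma> \<Longrightarrow> \<sigma> 0 = 0"
  unfolding ring_endo_def by (metis add_cancel_right_right add_0)

lemma pow0: "ring_endo \<sigma> \<Longrightarrow> (\<sigma> ^^ n) 0 = 0"
  by (induction n) (auto simp: endo0)

lemma pow1: fixes \<sigma> :: "'a::ring_1 \<Rightarrow> 'a" assumes "\<sigma> 1 = 1" shows "(\<sigma> ^^ n) 1 = 1"
  by (induction n) (simp_all add: assms)

lemma sm_cst_right: assumes "ring_endo \<sigma>"
  shows "skew_mult \<sigma> f (cst b) = (\<lambda>n. f n * (\<sigma> ^^ n) b)"
proof
  fix n
  have "skew_mult \<sigma> f (cst b) n = (\<Sum>i\<le>n. if i = n then f n * (\<sigma> ^^ n) b else 0)"
    unfolding skew_mult_def cst_def by (rule sum.cong) (auto simp: pow0[OF assms])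
  also have "\<dots> = f n * (\<sigma> ^^ n) b" by simp
  finally show "skew_mult \<sigma> f (cst b) n = f n * (\<sigma> ^^ n) b" .
qed

theorem theorem3p4:
  fixes \<sigma> :: "'a::ring_1 \<Rightarrow> 'a"
  assumes "ring_endo \<sigma>"
    and "\<sigma> 1 = 1"
    and "\<sigma> \<noteq> (\<lambda>_. 0)"
    and "\<sigma> \<noteq> id"
    and "right_sigma_reversible \<sigma>"
    and "pp_ring (skew_mult \<sigma>) skew_zero"
  shows "pp_ring ((*) :: 'a \<Rightarrow> 'a \<Rightarrow> 'a) 0"
proof -
  have R: "right_pp (skew_mult \<sigma>) skew_zero" and L: "left_pp (skew_mult \<sigma>) skew_zero"
    using assms(6) by (auto simp: pp_ring_def)
  have e1: "skew_mult \<sigma> f (cst 1) = f" for f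
    by (simp add: sm_cst_right[OF assms(1)] pow1[of \<sigma>, OF assms(2)])
  have e2: "skew_mult \<sigma> (cst 1) f = f" for f
    by (simp add: sm_cst_left)
  have "right_pp ((*) :: 'a \<Rightarrow> 'a \<Rightarrow> 'a) 0"
    unfolding right_pp_def
  proof
    fix a :: 'a
    obtain e where ee: "skew_mult \<sigma> e e = e"
      and eq: "{b. skew_mult \<sigma> (cst a) b = skew_zero} = {skew_mult \<sigma> e c |c. True}"
      using R unfolding right_pp_def by blast
    have idem: "e 0 * e 0 = e 0" using sm0[of \<sigma> e e] ee by simp
    have "e \<in> {skew_mult \<sigma> e c |c. True}" using e1[of e, symmetric] by blast
    hence "skew_mult \<sigma> (cst a) e = skew_zero" using eq by blast
    hence ae: "a * e 0 = 0" using sm0[of \<sigma> "cst a" e] by (simp add: skew_zero_def cst_def)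
    have "{b. a * b = 0} = {e 0 * c |c. True}"
    proof (intro equalityI subsetI)
      fix b assume "b \<in> {b. a * b = 0}"
      hence "skew_mult \<sigma> (cst a) (cst b) = skew_zero"
        unfolding sm_cst_left skew_zero_def by (auto simp: cst_def)
      then obtain c where "cst b = skew_mult \<sigma> e c" using eq by blast
      hence "cst b 0 = skew_mult \<sigma> e c 0" by simp
      hence "b = e 0 * c 0" using sm0[of \<sigma> e c] by (simp add: cst_def)
      thus "b \<in> {e 0 * c |c. True}" by blast
    next
      fix b assume "b \<in> {e 0 * c |c. True}"
      thus "b \<in> {b. a * b = 0}" using ae by (auto simp: mult.assoc[symmetric])
    qed
    thus "\<exists>e. e * e = e \<and> {b. a * b = 0} = {e * c |c. True}" using idem by blast
  qed
  moreover have "left_pp ((*) :: 'a \<Rightarrow> 'a \<Rightarrow> 'a) 0"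
    unfolding left_pp_def
  proof
    fix a :: 'a
    obtain e where ee: "skew_mult \<sigma> e e = e"
      and eq: "{b. skew_mult \<sigma> b (cst a) = skew_zero} = {skew_mult \<sigma> c e |c. True}"
      using L unfolding left_pp_def by blast
    have idem: "e 0 * e 0 = e 0" using sm0[of \<sigma> e e] ee by simp
    have "e \<in> {skew_mult \<sigma> c e |c. True}" using e2[of e, symmetric] by blast
    hence "skew_mult \<sigma> e (cst a) = skew_zero" using eq by blast
    hence ae: "e 0 * a = 0" using sm0[of \<sigma> e "cst a"] by (simp add: skew_zero_def cst_def)
    have "{b. b * a = 0} = {c * e 0 |c. True}"
    proof (intro equalityI subsetI)
      fix b assume "b \<in> {b. b * a = 0}"
      hence "skew_mult \<sigma> (cst b) (cst a) = skew_zero"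
        unfolding sm_cst_left skew_zero_def by (auto simp: cst_def)
      then obtain c where "cst b = skew_mult \<sigma> c e" using eq by blast
      hence "cst b 0 = skew_mult \<sigma> c e 0" by simp
      hence "b = c 0 * e 0" using sm0[of \<sigma> c e] by (simp add: cst_def)
      thus "b \<in> {c * e 0 |c. True}" by blast
    next
      fix b assume "b \<in> {c * e 0 |c. True}"
      thus "b \<in> {b. b * a = 0}" using ae by (auto simp: mult.assoc)
    qed
    thus "\<exists>e. e * e = e \<and> {b. b * a = 0} = {c * e |c. True}" using idem by blast
  qed
  ultimately show ?thesis by (simp add: pp_ring_def)
qed

end
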